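(* Let $Q\in\mathbb{R}^{n\times n}$ be symmetric positive definite, $\|x\|=\sqrt{x^TQx}$, $\|u\|_*=\sqrt{u^TQ^{-1}u}$. Let $f\colon\mathbb{R}^n\to\mathbb{R}$ be convex and differentiable with $\|\nabla f(x)-\nabla f(y)\|_*\le L\|x-y\|$ for all $x,y$, and assume $f$ has a minimizer $x_\star$, $f_\star=f(x_\star)$. Let $w$ be differentiable and $1$-strongly convex with respect to $\|\cdot\|$, and $V_x(y)=w(y)-\langle\nabla w(x),y-x\rangle-w(x)$. Let $\{\alpha_k\}_{k=1}^\infty$ be positive with $\alpha_1=\frac2L$ and $0\le\alpha_{k+1}^2L-2\alpha_{k+1}\le\alpha_k^2L$ for $k\ge1$, and $\tau_k=\frac2{\alpha_{k+1}L}$ for $k\ge1$. Given $x_0$, let $y_0=z_0=x_0$ and for $k=0,1,\dots$ \[ y_{k+1}=x_k-L^{-1}Q^{-1}\nabla f(x_k),\quad z_{k+1}=\operatorname*{argmin}_{y}\{V_{z_k}(y)+\langle\alpha_{k+1}\nabla f(x_k),y-x_k\rangle\},\quad x_{k+1}=(1-\tau_{k+1})y_{k+1}+\tau_{k+1}z_{k+1}. \] Let $\{\tilde\alpha_k\}_{k=1}^\infty$ be positive with $\tilde\alpha_1=\frac1L$ and $0\le\tilde\alpha_{k+1}^2L-\tilde\alpha_{k+1}\le\frac12\alpha_k^2L$ for $k\ge1$, let $\tilde\tau_k=\frac{1}{\tilde\alpha_{k+1}L}$ and $\tilde x_k=(1-\tilde\tau_k)y_k+\tilde\tau_kz_k$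 for $k\ge0$. Then for $k=0,1,\dots$, \[ f(\tilde x_k)-f_\star\le\frac{V_{x_0}(x_\star)}{L\tilde\alpha_{k+1}^2}. \]
   Context: $\langle\cdot,\cdot\rangle$ is the standard Euclidean inner product. "$1$-strongly convex with respect to $\|\cdot\|$" means $w(y)\ge w(x)+\langle\nabla w(x),y-x\rangle+\frac12\|y-x\|^2$ for all $x,y$. *)

theory Defs
  imports "HOL-Analysis.Analysis"
begin

definition qnorm :: "real^'n^'n \<Rightarrow> real^'n \<Rightarrow> real" where
  "qnorm Q x = sqrt (x \<bullet> (Q *v x))"

definition dnorm :: "real^'n^'n \<Rightarrow> real^'n \<Rightarrow> real" where
  "dnorm Q u = sqrt (u \<bullet> (matrix_inv Q *v u))"

definition sym_pos_def_mat :: "real^'n^'n \<Rightarrow> bool" where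
  "sym_pos_def_mat Q \<longleftrightarrow> transpose Q = Q \<and> (\<forall>x. x \<noteq> 0 \<longrightarrow> x \<bullet> (Q *v x) > 0)"

definition bregman :: "(real^'n \<Rightarrow> real) \<Rightarrow> (real^'n \<Rightarrow> real^'n) \<Rightarrow> real^'n \<Rightarrow> real^'n \<Rightarrow> real" where
  "bregman w gw x y = w y - gw x \<bullet> (y - x) - w x"

end

theory Submission
  imports Defs
begin

lemma mv_scaleR: "(A::real^'n^'m) *v (c *\<^sub>R x) = c *\<^sub>R (A *v x)"
  by (simp add: vec_eq_iff matrix_vector_mult_def sum_distrib_left algebra_simps)

lemma mv_neg: "(A::real^'n^'m) *v (- x) = - (A *v x)"
  using mv_scaleR[of A "-1" x] by simp

lemma spd_inv:
  fixes Q :: "real^'n^'n"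
  assumes Q: "sym_pos_def_mat Q"
  shows "Q ** matrix_inv Q = mat 1" "matrix_inv Q ** Q = mat 1"
proof -
  have inj: "inj ((*v) Q)"
  proof (rule injI)
    fix a b assume "Q *v a = Q *v b"
    then have "Q *v (a - b) = 0" by (simp add: matrix_vector_mult_diff_distrib)
    then have "(a - b) \<bullet> (Q *v (a - b)) = 0" by simp
    then show "a = b" using Q unfolding sym_pos_def_mat_def by (metis less_irrefl right_minus_eq)
  qed
  then have "invertible Q" using matrix_left_invertible_injective invertible_left_inverse by blast
  then have "\<exists>A'. Q ** A' = mat 1 \<and> A' ** Q = mat 1" unfolding invertible_def by auto
  then have "Q ** matrix_inv Q = mat 1 \<and> matrix_inv Q ** Q = mat 1"
    unfolding matrix_inv_def by (rule someI_ex)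
  then show "Q ** matrix_inv Q = mat 1" "matrix_inv Q ** Q = mat 1" by auto
qed

lemma spd_inv_vec:
  fixes Q :: "real^'n^'n"
  assumes Q: "sym_pos_def_mat Q"
  shows "Q *v (matrix_inv Q *v u) = u"
  by (simp add: matrix_vector_mul_assoc spd_inv[OF Q])

lemma spd_sym:
  fixes Q :: "real^'n^'n"
  assumes Q: "sym_pos_def_mat Q"
  shows "a \<bullet> (Q *v b) = b \<bullet> (Q *v a)"
proof -
  have "a \<bullet> (Q *v b) = (a v* Q) \<bullet> b" by (simp add: dot_lmul_matrix)
  also have "a v* Q = a v* transpose Q" using Q unfolding sym_pos_def_mat_def by simp
  also have "\<dots> = Q *v a" by simp
  finally show ?thesis by (simp add: inner_commute)
qed

lemma spd_inv_sym:
  fixes Q :: "real^'n^'n"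
  assumes Q: "sym_pos_def_mat Q"
  shows "a \<bullet> (matrix_inv Q *v b) = b \<bullet> (matrix_inv Q *v a)"
proof -
  define p where "p = matrix_inv Q *v a"
  define q where "q = matrix_inv Q *v b"
  have a: "a = Q *v p" and b: "b = Q *v q" by (simp_all add: p_def q_def spd_inv_vec[OF Q])
  have "a \<bullet> (matrix_inv Q *v b) = (Q *v p) \<bullet> q" by (simp add: a q_def)
  also have "\<dots> = (Q *v q) \<bullet> p" using spd_sym[OF Q, of q p] by (simp add: inner_commute)
  also have "\<dots> = b \<bullet> (matrix_inv Q *v a)" by (simp add: b p_def)
  finally show ?thesis .
qed

lemma spd_nonneg:
  fixes Q :: "real^'n^'n"
  assumes Q: "sym_pos_def_mat Q"
  shows "x \<bullet> (Q *v x) \<ge> 0"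
  using Q unfolding sym_pos_def_mat_def by (cases "x = 0") (auto intro: less_imp_le)

lemma spd_inv_nonneg:
  fixes Q :: "real^'n^'n"
  assumes Q: "sym_pos_def_mat Q"
  shows "u \<bullet> (matrix_inv Q *v u) \<ge> 0"
proof -
  define p where "p = matrix_inv Q *v u"
  have "u = Q *v p" by (simp add: p_def spd_inv_vec[OF Q])
  then have "u \<bullet> (matrix_inv Q *v u) = (Q *v p) \<bullet> p" by (simp add: p_def)
  also have "\<dots> = p \<bullet> (Q *v p)" by (simp add: inner_commute)
  finally show ?thesis using spd_nonneg[OF Q] by simp
qed

lemma amgm:
  fixes Q :: "real^'n^'n"
  assumes Q: "sym_pos_def_mat Q" and s: "s > 0"
  shows "2 * (u \<bullet> d) \<le> s * (u \<bullet> (matrix_inv Q *v u)) + (d \<bullet> (Q *v d)) / s"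
proof -
  define p where "p = matrix_inv Q *v u"
  have u: "Q *v p = u" by (simp add: p_def spd_inv_vec[OF Q])
  define v where "v = s *\<^sub>R p - d"
  have "0 \<le> v \<bullet> (Q *v v)" by (rule spd_nonneg[OF Q])
  also have "v \<bullet> (Q *v v) = s * s * (p \<bullet> u) - 2 * s * (u \<bullet> d) + d \<bullet> (Q *v d)"
  proof -
    have "Q *v v = s *\<^sub>R u - Q *v d" by (simp add: v_def matrix_vector_mult_diff_distrib u mv_scaleR)
    then have "v \<bullet> (Q *v v) = (s *\<^sub>R p - d) \<bullet> (s *\<^sub>R u - Q *v d)" by (simp add: v_def)
    also have "\<dots> = s * s*(p \<bullet> u) - s * (p \<bullet> (Q *v d)) - s * (d \<bullet> u) + d \<bullet> (Q *v d)"
      by (simp add: algebra_simps inner_diff_left inner_diff_right)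
    finally have "v \<bullet> (Q *v v) = s * s*(p \<bullet> u) - s * (p \<bullet> (Q *v d)) - s * (d \<bullet> u) + d \<bullet> (Q *v d)" .
    moreover have "p \<bullet> (Q *v d) = d \<bullet> u" using spd_sym[OF Q, of p d] u by simp
    ultimately show ?thesis by (simp add: inner_commute)
  qed
  finally have "2 * s * (u \<bullet> d) \<le> s * s * (p \<bullet> u) + d \<bullet> (Q *v d)" by simp
  then have "2 * (u \<bullet> d) \<le> (s * s * (p \<bullet> u) + d \<bullet> (Q *v d)) / s" using s by (simp add: field_simps)
  also have "\<dots> = s * (u \<bullet> (matrix_inv Q *v u)) + (d \<bullet> (Q *v d)) / s"
    using s by (simp add: p_def inner_commute field_simps)
  finally show ?thesis .
qed


lemma line_deriv:
  fixes F :: "real^'n \<Rightarrow> real"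
  assumes der: "\<And>u. (F has_derivative (\<lambda>h. G u \<bullet> h)) (at u)"
  shows "((\<lambda>t. F (x + t *\<^sub>R d)) has_real_derivative (G (x + t *\<^sub>R d) \<bullet> d)) (at t within S)"
proof -
  have l: "((\<lambda>t. x + t *\<^sub>R d) has_derivative (\<lambda>s. s *\<^sub>R d)) (at t within S)"
    by (auto intro!: derivative_eq_intros)
  have "((\<lambda>t. F (x + t *\<^sub>R d)) has_derivative (\<lambda>s. G (x + t *\<^sub>R d) \<bullet> (s *\<^sub>R d))) (at t within S)"
    by (rule has_derivative_compose[OF l der])
  moreover have "(\<lambda>s. G (x + t *\<^sub>R d) \<bullet> (s *\<^sub>R d)) = (*) (G (x + t *\<^sub>R d) \<bullet> d)"
    by (auto simp: mult.commute)
  ultimately show ?thesis unfolding has_field_derivative_def by simp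
qed

lemma conv_tangent:
  fixes F :: "real^'n \<Rightarrow> real"
  assumes cv: "convex_on UNIV F"
    and der: "\<And>u. (F has_derivative (\<lambda>h. G u \<bullet> h)) (at u)"
  shows "F v \<ge> F x + G x \<bullet> (v - x)"
proof -
  define d where "d = v - x"
  define \<phi> where "\<phi> t = F (x + t *\<^sub>R d)" for t :: real
  have "convex_on UNIV \<phi>"
  proof (rule convex_onI)
    fix t a b :: real assume t: "t > 0" "t < 1"
    have "x + ((1 - t) *\<^sub>R a + t *\<^sub>R b) *\<^sub>R d = (1 - t) *\<^sub>R (x + a *\<^sub>R d) + t *\<^sub>R (x + b *\<^sub>R d)"
      by (simp add: algebra_simps)
    then show "\<phi> ((1 - t) *\<^sub>R a + t *\<^sub>R b) \<le> (1 - t) * \<phi> a + t * \<phi> b"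
      unfolding \<phi>_def using t convex_onD[OF cv, of t "x + a *\<^sub>R d" "x + b *\<^sub>R d"] by simp
  qed simp
  moreover have "(\<phi> has_field_derivative (G (x + 0 *\<^sub>R d) \<bullet> d)) (at 0 within UNIV)"
    unfolding \<phi>_def by (rule line_deriv[OF der])
  ultimately have "\<phi> 1 - \<phi> 0 \<ge> (G (x + 0 *\<^sub>R d) \<bullet> d) * (1 - 0)"
    by (intro convex_on_imp_above_tangent[where A=UNIV]) auto
  then show ?thesis by (simp add: \<phi>_def d_def)
qed

lemma P_scale:
  fixes Q :: "real^'n^'n"
  shows "(t *\<^sub>R d) \<bullet> (Q *v (t *\<^sub>R d)) = t\<^sup>2 * (d \<bullet> (Q *v d))"
  by (simp add: mv_scaleR power2_eq_square)

lemma D_scale: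
  fixes Q :: "real^'n^'n"
  shows "(t *\<^sub>R d) \<bullet> (matrix_inv Q *v (t *\<^sub>R d)) = t\<^sup>2 * (d \<bullet> (matrix_inv Q *v d))"
  by (simp add: mv_scaleR power2_eq_square)

lemma descent:
  fixes Q :: "real^'n^'n" and F :: "real^'n \<Rightarrow> real"
  assumes Q: "sym_pos_def_mat Q" and L: "L > 0"
    and der: "\<And>u. (F has_derivative (\<lambda>h. G u \<bullet> h)) (at u)"
    and lip: "\<And>u v. (G u - G v) \<bullet> (matrix_inv Q *v (G u - G v)) \<le> L\<^sup>2 * ((u - v) \<bullet> (Q *v (u - v)))"
  shows "F y \<le> F x + G x \<bullet> (y - x) + L / 2 * ((y - x) \<bullet> (Q *v (y - x)))"
proof -
  define d where "d = y - x"
  define Pd where "Pd = d \<bullet> (Q *v d)"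
  define h where "h t = F (x + t *\<^sub>R d) - t * (G x \<bullet> d) - L / 2 * t\<^sup>2 * Pd" for t
  have "h 0 \<ge> h 1"
  proof (rule DERIV_nonpos_imp_nonincreasing[of 0 1 h])
    fix t :: real assume t: "0 \<le> t" "t \<le> 1"
    have "(h has_real_derivative (G (x + t *\<^sub>R d) \<bullet> d - G x \<bullet> d - L / 2 * (2 * t) * Pd)) (at t)"
      unfolding h_def
      by (auto intro!: derivative_eq_intros line_deriv[OF der] simp: power2_eq_square)
    moreover have "G (x + t *\<^sub>R d) \<bullet> d - G x \<bullet> d - L / 2 * (2 * t) * Pd \<le> 0"
    proof (cases "t = 0")
      case True then show ?thesis by simp
    next
      case False
      with t have tp: "t > 0" by simp
      define u where "u = G (x + t *\<^sub>R d) - G x"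
      have A1: "2 * (u \<bullet> d) \<le> (1 / (L * t)) * (u \<bullet> (matrix_inv Q *v u)) + Pd / (1 / (L * t))"
        unfolding Pd_def by (rule amgm[OF Q]) (use L tp in simp)
      have A2: "u \<bullet> (matrix_inv Q *v u) \<le> L\<^sup>2 * (t\<^sup>2 * Pd)"
      proof -
        have "x + t *\<^sub>R d - x = t *\<^sub>R d" by simp
        then show ?thesis using lip[of "x + t *\<^sub>R d" x] P_scale[of t d Q] unfolding u_def Pd_def by metis
      qed
      have "2 * (u \<bullet> d) \<le> (1 / (L * t)) * (L\<^sup>2 * (t\<^sup>2 * Pd)) + Pd * (L * t)"
      proof -
        have c: "0 \<le> 1 / (L * t)" using L tp by simp
        have "(1 / (L * t)) * (u \<bullet> (matrix_inv Q *v u)) \<le> (1 / (L * t)) * (L\<^sup>2 * (t\<^sup>2 * Pd))"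
          by (rule mult_left_mono[OF A2 c])
        moreover have "Pd / (1 / (L * t)) = Pd * (L * t)" by simp
        ultimately show ?thesis using A1 by linarith
      qed
      also have "\<dots> = 2 * (L * t * Pd)" using L tp by (simp add: field_simps power2_eq_square)
      finally show ?thesis by (simp add: u_def inner_diff_left)
    qed
    ultimately show "\<exists>y. (h has_real_derivative y) (at t) \<and> y \<le> 0" by blast
  qed simp
  then show ?thesis by (simp add: h_def d_def Pd_def)
qed


lemma D_diff:
  fixes Q :: "real^'n^'n"
  assumes Q: "sym_pos_def_mat Q"
  shows "(a - b) \<bullet> (matrix_inv Q *v (a - b)) = a \<bullet> (matrix_inv Q *v a) + b \<bullet> (matrix_inv Q *v b) - 2 * (b \<bullet> (matrix_inv Q *v a))"
proof -
  have "(a - b) \<bullet> (matrix_inv Q *v (a - b)) = a \<bullet> (matrix_inv Q *v a) - a \<bullet> (matrix_inv Q *v b) - b \<bullet> (matrix_inv Q *v a) + b \<bullet> (matrix_inv Q *v b)"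
    by (simp add: matrix_vector_mult_diff_distrib inner_diff_left inner_diff_right)
  then show ?thesis using spd_inv_sym[OF Q, of a b] by simp
qed

lemma gradstep:
  fixes Q :: "real^'n^'n" and F :: "real^'n \<Rightarrow> real"
  assumes Q: "sym_pos_def_mat Q" and L: "L > 0"
    and der: "\<And>u. (F has_derivative (\<lambda>h. G u \<bullet> h)) (at u)"
    and lip: "\<And>u v. (G u - G v) \<bullet> (matrix_inv Q *v (G u - G v)) \<le> L\<^sup>2 * ((u - v) \<bullet> (Q *v (u - v)))"
  shows "F (x - (1 / L) *\<^sub>R (matrix_inv Q *v G x)) \<le> F x - (G x \<bullet> (matrix_inv Q *v G x)) / (2 * L)"
proof -
  define p where "p = matrix_inv Q *v G x"
  define y where "y = x - (1 / L) *\<^sub>R p"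
  have Qp: "Q *v p = G x" by (simp add: p_def spd_inv_vec[OF Q])
  have d: "y - x = (- (1 / L)) *\<^sub>R p" by (simp add: y_def)
  have "F y \<le> F x + G x \<bullet> (y - x) + L / 2 * ((y - x) \<bullet> (Q *v (y - x)))"
    by (rule descent[OF Q L der lip])
  also have "G x \<bullet> (y - x) = - (1 / L) * (G x \<bullet> p)" by (simp add: d)
  also have "(y - x) \<bullet> (Q *v (y - x)) = (1 / L)\<^sup>2 * (G x \<bullet> p)"
    unfolding d P_scale by (simp add: Qp inner_commute)
  finally have "F y \<le> F x - (1 / L) * (G x \<bullet> p) + L / 2 * ((1 / L)\<^sup>2 * (G x \<bullet> p))" by simp
  also have "\<dots> = F x - (G x \<bullet> p) / (2 * L)" using L by (simp add: field_simps power2_eq_square)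
  finally show ?thesis by (simp add: y_def p_def)
qed

lemma cocoer:
  fixes Q :: "real^'n^'n" and F :: "real^'n \<Rightarrow> real"
  assumes Q: "sym_pos_def_mat Q" and L: "L > 0"
    and cv: "convex_on UNIV F"
    and der: "\<And>u. (F has_derivative (\<lambda>h. G u \<bullet> h)) (at u)"
    and lip: "\<And>u v. (G u - G v) \<bullet> (matrix_inv Q *v (G u - G v)) \<le> L\<^sup>2 * ((u - v) \<bullet> (Q *v (u - v)))"
  shows "F y \<ge> F x + G x \<bullet> (y - x) + ((G y - G x) \<bullet> (matrix_inv Q *v (G y - G x))) / (2 * L)"
proof -
  define \<phi> where "\<phi> v = F v - G x \<bullet> v" for v
  define G\<phi> where "G\<phi> v = G v - G x" for v
  have der\<phi>: "(\<phi> has_derivative (\<lambda>h. G\<phi> u \<bullet> h)) (at u)" for u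
    unfolding \<phi>_def G\<phi>_def
    by (rule has_derivative_eq_rhs, (rule derivative_eq_intros der)+) (auto simp: inner_diff_left)
  have lip\<phi>: "(G\<phi> u - G\<phi> v) \<bullet> (matrix_inv Q *v (G\<phi> u - G\<phi> v)) \<le> L\<^sup>2 * ((u - v) \<bullet> (Q *v (u - v)))" for u v
    unfolding G\<phi>_def using lip[of u v] by simp
  define y' where "y' = y - (1 / L) *\<^sub>R (matrix_inv Q *v G\<phi> y)"
  have "\<phi> y' \<le> \<phi> y - (G\<phi> y \<bullet> (matrix_inv Q *v G\<phi> y)) / (2 * L)"
    unfolding y'_def by (rule gradstep[OF Q L der\<phi> lip\<phi>])
  moreover have "F y' \<ge> F x + G x \<bullet> (y' - x)" by (rule conv_tangent[OF cv der])
  ultimately show ?thesis unfolding \<phi>_def G\<phi>_def by (simp add: inner_diff_right)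
qed

lemma couple:
  fixes Q :: "real^'n^'n" and F :: "real^'n \<Rightarrow> real"
  assumes Q: "sym_pos_def_mat Q" and L: "L > 0"
    and cv: "convex_on UNIV F"
    and der: "\<And>u. (F has_derivative (\<lambda>h. G u \<bullet> h)) (at u)"
    and lip: "\<And>u v. (G u - G v) \<bullet> (matrix_inv Q *v (G u - G v)) \<le> L\<^sup>2 * ((u - v) \<bullet> (Q *v (u - v)))"
  shows "G xh \<bullet> ((xp - (1 / L) *\<^sub>R (matrix_inv Q *v G xp)) - xh)
     \<le> (F xp - (G xp \<bullet> (matrix_inv Q *v G xp)) / (2 * L)) - F xh - (G xh \<bullet> (matrix_inv Q *v G xh)) / (2 * L)"
proof -
  have c: "F xp \<ge> F xh + G xh \<bullet> (xp - xh) + ((G xp - G xh) \<bullet> (matrix_inv Q *v (G xp - G xh))) / (2 * L)"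
    by (rule cocoer[OF Q L cv der lip])
  have e: "G xh \<bullet> ((xp - (1 / L) *\<^sub>R (matrix_inv Q *v G xp)) - xh) = G xh \<bullet> (xp - xh) - (G xh \<bullet> (matrix_inv Q *v G xp)) / L"
    by (simp add: inner_diff_right)
  have "((G xp - G xh) \<bullet> (matrix_inv Q *v (G xp - G xh))) / (2 * L)
      = (G xp \<bullet> (matrix_inv Q *v G xp)) / (2 * L) + (G xh \<bullet> (matrix_inv Q *v G xh)) / (2 * L) - (G xh \<bullet> (matrix_inv Q *v G xp)) / L"
    unfolding D_diff[OF Q] using L by (simp add: field_simps)
  then show ?thesis using c e by linarith
qed


lemma qnorm_sq:
  fixes Q :: "real^'n^'n"
  assumes Q: "sym_pos_def_mat Q"
  shows "(qnorm Q v)\<^sup>2 = v \<bullet> (Q *v v)"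
  unfolding qnorm_def using spd_nonneg[OF Q] by simp

lemma P_neg:
  fixes Q :: "real^'n^'n"
  shows "(a - b) \<bullet> (Q *v (a - b)) = (b - a) \<bullet> (Q *v (b - a))"
proof -
  have "a - b = (-1) *\<^sub>R (b - a)" by simp
  then show ?thesis using P_scale[of "-1" "b - a" Q] by simp
qed

lemma breg_low:
  fixes Q :: "real^'n^'n"
  assumes Q: "sym_pos_def_mat Q"
    and w_sc: "\<And>u v. w v \<ge> w u + gw u \<bullet> (v - u) + 1/2 * (qnorm Q (v - u))\<^sup>2"
  shows "bregman w gw z v \<ge> 1/2 * ((v - z) \<bullet> (Q *v (v - z)))"
  using w_sc[of z v] unfolding bregman_def qnorm_sq[OF Q] by simp

lemma mirror:
  fixes Q :: "real^'n^'n"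
  assumes Q: "sym_pos_def_mat Q"
    and w_sc: "\<And>u v. w v \<ge> w u + gw u \<bullet> (v - u) + 1/2 * (qnorm Q (v - u))\<^sup>2"
    and gc: "gw z' = gw z - a *\<^sub>R g"
  shows "bregman w gw z' u \<le> bregman w gw z u + a\<^sup>2 * (g \<bullet> (matrix_inv Q *v g)) / 2 - a * (g \<bullet> (z - u))"
proof -
  have three: "bregman w gw z' u = bregman w gw z u - bregman w gw z z' + a * (g \<bullet> (u - z'))"
    unfolding bregman_def gc by (simp add: inner_diff_left inner_diff_right algebra_simps)
  have low: "bregman w gw z z' \<ge> 1/2 * ((z' - z) \<bullet> (Q *v (z' - z)))" by (rule breg_low[OF Q w_sc])
  have am: "2 * ((a *\<^sub>R g) \<bullet> (z - z')) \<le> 1 * ((a *\<^sub>R g) \<bullet> (matrix_inv Q *v (a *\<^sub>R g))) + ((z - z') \<bullet> (Q *v (z - z'))) / 1"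
    by (rule amgm[OF Q]) simp
  have "(a *\<^sub>R g) \<bullet> (matrix_inv Q *v (a *\<^sub>R g)) = a\<^sup>2 * (g \<bullet> (matrix_inv Q *v g))" by (rule D_scale)
  moreover have "(z - z') \<bullet> (Q *v (z - z')) = (z' - z) \<bullet> (Q *v (z' - z))" by (rule P_neg)
  moreover have "a * (g \<bullet> (u - z')) = a * (g \<bullet> (z - z')) - a * (g \<bullet> (z - u))" by (simp add: inner_diff_right algebra_simps)
  ultimately show ?thesis using three low am by simp
qed

lemma mirror_grad:
  fixes Q :: "real^'n^'n"
  assumes w_grad: "\<And>u. (w has_derivative (\<lambda>h. gw u \<bullet> h)) (at u)"
    and zs: "\<And>u. bregman w gw z z' + a * (g \<bullet> (z' - xk)) \<le> bregman w gw z u + a * (g \<bullet> (u - xk))"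
  shows "gw z' = gw z - a *\<^sub>R g"
proof -
  define \<phi> where "\<phi> u = bregman w gw z u + a * (g \<bullet> (u - xk))" for u
  have "(\<phi> has_derivative (\<lambda>h. gw z' \<bullet> h - gw z \<bullet> h + a * (g \<bullet> h))) (at z')"
  proof -
    have d2: "((\<lambda>u. gw z \<bullet> (u - z)) has_derivative (\<lambda>h. gw z \<bullet> h)) (at z')"
      by (auto intro!: derivative_eq_intros)
    have d3: "((\<lambda>u. a * (g \<bullet> (u - xk))) has_derivative (\<lambda>h. a * (g \<bullet> h))) (at z')"
      by (auto intro!: derivative_eq_intros)
    have "((\<lambda>u. w u - gw z \<bullet> (u - z) - w z + a * (g \<bullet> (u - xk))) has_derivative
        (\<lambda>h. gw z' \<bullet> h - gw z \<bullet> h - 0 + a * (g \<bullet> h))) (at z')"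
      by (intro has_derivative_add has_derivative_diff w_grad d2 d3 has_derivative_const)
    then show ?thesis unfolding \<phi>_def bregman_def by simp
  qed
  moreover have "\<forall>y\<in>UNIV. \<phi> z' \<le> \<phi> y" using zs unfolding \<phi>_def by simp
  ultimately have "(\<lambda>h. gw z' \<bullet> h - gw z \<bullet> h + a * (g \<bullet> h)) = (\<lambda>v. 0)"
    by (intro differential_zero_maxmin[of z' UNIV]) auto
  then have "(gw z' - gw z + a *\<^sub>R g) \<bullet> (gw z' - gw z + a *\<^sub>R g) = 0"
    by (metis (no_types, lifting) inner_diff_left inner_add_left inner_scaleR_left)
  then have "gw z' - gw z + a *\<^sub>R g = 0" by (simp only: inner_eq_zero_iff)
  then show ?thesis by (simp add: algebra_simps)
qed

lemma step_alg:
  fixes a L c fx fs D V0 V1 ipx ipy ipz Fm Fk A :: real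
  assumes L: "L > 0" and a: "a > 0" and c: "c = a * L / 2 - 1" and c0: "c \<ge> 0"
    and Fk: "Fk = fx - D / (2 * L)"
    and m: "V1 \<le> V0 + a\<^sup>2 * D / 2 - a * ipz"
    and ipz: "ipz = - ipx - c * ipy"
    and ox: "ipx \<le> fs - fx - D / (2 * L)"
    and oy: "ipy \<le> Fm - fx - D / (2 * L)"
    and rec: "a\<^sup>2 * L - 2 * a \<le> A\<^sup>2 * L"
    and Fm: "Fm \<ge> fs"
  shows "a\<^sup>2 * L / 2 * (Fk - fs) + V1 \<le> A\<^sup>2 * L / 2 * (Fm - fs) + V0"
proof -
  have h1: "a * ipx \<le> a * (fs - fx - D / (2 * L))" using ox a by (simp add: mult_left_mono)
  have ac: "a * c \<ge> 0" using a c0 by simp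
  have h2: "(a * c) * ipy \<le> (a * c) * (Fm - fx - D / (2 * L))" using oy ac by (simp add: mult_left_mono)
  have "a * c * 2 = a\<^sup>2 * L - 2 * a" unfolding c by (simp add: field_simps power2_eq_square)
  then have "a * c * 2 \<le> A\<^sup>2 * L" using rec by linarith
  then have acA: "a * c \<le> A\<^sup>2 * L / 2" by (simp add: field_simps)
  have h3: "(a * c) * (Fm - fs) \<le> (A\<^sup>2 * L / 2) * (Fm - fs)" by (rule mult_right_mono[OF acA]) (use Fm in simp)
  have idt: "a\<^sup>2 * L / 2 * (Fk - fs) + a\<^sup>2 * D / 2 + a * (fs - fx - D / (2 * L)) + (a * c) * (Fm - fx - D / (2 * L)) = (a * c) * (Fm - fs)"
    using L unfolding Fk c by (simp add: field_simps power2_eq_square)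
  have iz: "a * ipz = - (a * ipx) - (a * c) * ipy" unfolding ipz by (simp add: algebra_simps)
  show ?thesis using m h1 h2 h3 idt iz by linarith
qed

lemma base_alg:
  fixes a L fx fs D V0 V1 ipx Fk :: real
  assumes L: "L > 0" and a: "a = 2 / L"
    and Fk: "Fk = fx - D / (2 * L)"
    and m: "V1 \<le> V0 + a\<^sup>2 * D / 2 + a * ipx"
    and ox: "ipx \<le> fs - fx - D / (2 * L)"
  shows "a\<^sup>2 * L / 2 * (Fk - fs) + V1 \<le> V0"
proof -
  have "a \<ge> 0" using a L by simp
  then have h1: "a * ipx \<le> a * (fs - fx - D / (2 * L))" by (rule mult_left_mono[OF ox])
  have idt: "a\<^sup>2 * L / 2 * (Fk - fs) + a\<^sup>2 * D / 2 + a * (fs - fx - D / (2 * L)) = 0"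
    using L unfolding Fk a by (simp add: field_simps power2_eq_square)
  show ?thesis using m h1 idt by linarith
qed

lemma tilde_alg:
  fixes b L c fx fs D Vz ipx ipy ipz Fm A V0 :: real
  assumes L: "L > 0" and b: "b > 0" and c: "c = b * L - 1" and c0: "c \<ge> 0"
    and ox: "ipx \<le> fs - fx - D / (2 * L)"
    and ipz: "ipz = - ipx - c * ipy"
    and am: "b * ipz \<le> b\<^sup>2 * D / 2 + Vz"
    and oy: "ipy \<le> Fm - fx - D / (2 * L)"
    and rec: "b\<^sup>2 * L - b \<le> 1/2 * A\<^sup>2 * L"
    and Fm: "Fm \<ge> fs"
    and inv: "A\<^sup>2 * L / 2 * (Fm - fs) + Vz \<le> V0"
  shows "fx - fs \<le> V0 / (L * b\<^sup>2)"
proof -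
  have h1: "b * ipx \<le> b * (fs - fx - D / (2 * L))" using ox b by (simp add: mult_left_mono)
  have bc: "b * c \<ge> 0" using b c0 by simp
  have h2: "(b * c) * ipy \<le> (b * c) * (Fm - fx - D / (2 * L))" using oy bc by (simp add: mult_left_mono)
  have "b * c = b\<^sup>2 * L - b" unfolding c by (simp add: field_simps power2_eq_square)
  then have bcA: "b * c \<le> A\<^sup>2 * L / 2" using rec by linarith
  have h3: "(b * c) * (Fm - fs) \<le> (A\<^sup>2 * L / 2) * (Fm - fs)" by (rule mult_right_mono[OF bcA]) (use Fm in simp)
  have iz: "b * ipz = - (b * ipx) - (b * c) * ipy" unfolding ipz by (simp add: algebra_simps)
  have idt: "b * (fs - fx - D / (2 * L)) + (b * c) * (Fm - fx - D / (2 * L)) + b\<^sup>2 * D / 2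
      = (b * c) * (Fm - fs) - (L * b\<^sup>2) * (fx - fs)"
    using L unfolding c by (simp add: field_simps power2_eq_square)
  have "(L * b\<^sup>2) * (fx - fs) \<le> V0" using h1 h2 h3 iz idt am inv by linarith
  moreover have "L * b\<^sup>2 > 0" using L b by simp
  ultimately show ?thesis by (simp add: pos_le_divide_eq mult.commute)
qed


lemma coup_vec:
  fixes xv yv zv :: "real^'n"
  assumes t: "t \<noteq> 0" and xv: "xv = (1 - t) *\<^sub>R yv + t *\<^sub>R zv"
  shows "xv - zv = ((1 - t) / t) *\<^sub>R (yv - xv)"
proof -
  have "yv - xv = t *\<^sub>R (yv - zv)" unfolding xv by (simp add: algebra_simps)
  then have "((1 - t) / t) *\<^sub>R (yv - xv) = (1 - t) *\<^sub>R (yv - zv)" using t by simp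
  also have "\<dots> = xv - zv" unfolding xv by (simp add: algebra_simps)
  finally show ?thesis by simp
qed

theorem theorem6:
  fixes Q :: "real^'n^'n"
    and f w :: "real^'n \<Rightarrow> real"
    and gf gw :: "real^'n \<Rightarrow> real^'n"
    and L :: real
    and xs x0 :: "real^'n"
    and \<alpha> \<alpha>t :: "nat \<Rightarrow> real"
    and x y z :: "nat \<Rightarrow> real^'n"
  assumes Q: "sym_pos_def_mat Q"
    and L_pos: "L > 0"
    and f_convex: "convex_on UNIV f"
    and f_grad: "\<And>u. (f has_derivative (\<lambda>h. gf u \<bullet> h)) (at u)"
    and f_lip: "\<And>u v. dnorm Q (gf u - gf v) \<le> L * qnorm Q (u - v)"
    and xs_min: "\<And>u. f xs \<le> f u"
    and w_grad: "\<And>u. (w has_derivative (\<lambda>h. gw u \<bullet> h)) (at u)"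
    and w_sc: "\<And>u v. w v \<ge> w u + gw u \<bullet> (v - u) + 1/2 * (qnorm Q (v - u))\<^sup>2"
    and \<alpha>_pos: "\<And>k. k \<ge> 1 \<Longrightarrow> \<alpha> k > 0"
    and \<alpha>1: "\<alpha> 1 = 2 / L"
    and \<alpha>_rec: "\<And>k. k \<ge> 1 \<Longrightarrow>
        0 \<le> (\<alpha> (k+1))\<^sup>2 * L - 2 * \<alpha> (k+1) \<and> (\<alpha> (k+1))\<^sup>2 * L - 2 * \<alpha> (k+1) \<le> (\<alpha> k)\<^sup>2 * L"
    and y0: "y 0 = x0" and z0: "z 0 = x0" and x0: "x 0 = x0"
    and y_step: "\<And>k. y (k+1) = x k - (1 / L) *\<^sub>R (matrix_inv Q *v gf (x k))"
    and z_step: "\<And>k u. bregman w gw (z k) (z (k+1)) + \<alpha> (k+1) * (gf (x k) \<bullet> (z (k+1) - x k))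
                       \<le> bregman w gw (z k) u + \<alpha> (k+1) * (gf (x k) \<bullet> (u - x k))"
    and x_step: "\<And>k. x (k+1) = (1 - 2 / (\<alpha> (k+2) * L)) *\<^sub>R y (k+1)
                                 + (2 / (\<alpha> (k+2) * L)) *\<^sub>R z (k+1)"
    and \<alpha>t_pos: "\<And>k. k \<ge> 1 \<Longrightarrow> \<alpha>t k > 0"
    and \<alpha>t1: "\<alpha>t 1 = 1 / L"
    and \<alpha>t_rec: "\<And>k. k \<ge> 1 \<Longrightarrow>
        0 \<le> (\<alpha>t (k+1))\<^sup>2 * L - \<alpha>t (k+1) \<and> (\<alpha>t (k+1))\<^sup>2 * L - \<alpha>t (k+1) \<le> 1/2 * (\<alpha> k)\<^sup>2 * L"
  shows "\<forall>k. f ((1 - 1 / (\<alpha>t (k+1) * L)) *\<^sub>R y k + (1 / (\<alpha>t (k+1) * L)) *\<^sub>R z k) - f xs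
             \<le> bregman w gw x0 xs / (L * (\<alpha>t (k+1))\<^sup>2)"
  proof -
  define D where "D u = u \<bullet> (matrix_inv Q *v u)" for u
  define fs where "fs = f xs"
  define V where "V v = bregman w gw v xs" for v
  define F where "F k = f (x k) - D (gf (x k)) / (2 * L)" for k
  have lip: "(gf u - gf v) \<bullet> (matrix_inv Q *v (gf u - gf v)) \<le> L\<^sup>2 * ((u - v) \<bullet> (Q *v (u - v)))" for u v
  proof -
    have "sqrt ((gf u - gf v) \<bullet> (matrix_inv Q *v (gf u - gf v))) \<le> L * sqrt ((u - v) \<bullet> (Q *v (u - v)))"
      using f_lip[of u v] unfolding dnorm_def qnorm_def .
    then have "(sqrt ((gf u - gf v) \<bullet> (matrix_inv Q *v (gf u - gf v))))\<^sup>2 \<le> (L * sqrt ((u - v) \<bullet> (Q *v (u - v))))\<^sup>2"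
      by (rule power_mono) (rule real_sqrt_ge_zero[OF spd_inv_nonneg[OF Q]])
    moreover have "(sqrt ((gf u - gf v) \<bullet> (matrix_inv Q *v (gf u - gf v))))\<^sup>2 = (gf u - gf v) \<bullet> (matrix_inv Q *v (gf u - gf v))"
      by (rule real_sqrt_pow2[OF spd_inv_nonneg[OF Q]])
    moreover have "(L * sqrt ((u - v) \<bullet> (Q *v (u - v))))\<^sup>2 = L\<^sup>2 * ((u - v) \<bullet> (Q *v (u - v)))"
      unfolding power_mult_distrib by (simp only: real_sqrt_pow2[OF spd_nonneg[OF Q]])
    ultimately show ?thesis by simp
  qed
  have gxs: "gf xs = 0"
  proof -
    have "(\<lambda>h. gf xs \<bullet> h) = (\<lambda>v. 0)"
      by (rule differential_zero_maxmin[of xs UNIV f]) (use f_grad xs_min in auto)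
    then have "gf xs \<bullet> gf xs = 0" by metis
    then show ?thesis by simp
  qed
  have Fge: "F k \<ge> fs" for k
  proof -
    have "f (y (k+1)) \<le> F k" unfolding y_step F_def D_def by (rule gradstep[OF Q L_pos f_grad lip])
    then show ?thesis using xs_min[of "y (k+1)"] unfolding fs_def by simp
  qed
  have opt: "gf v \<bullet> (xs - v) \<le> fs - f v - D (gf v) / (2 * L)" for v
  proof -
    have "f xs \<ge> f v + gf v \<bullet> (xs - v) + ((gf xs - gf v) \<bullet> (matrix_inv Q *v (gf xs - gf v))) / (2 * L)"
      by (rule cocoer[OF Q L_pos f_convex f_grad lip])
    then show ?thesis unfolding gxs fs_def D_def by (simp add: mv_neg)
  qed
  have grad: "gw (z (k+1)) = gw (z k) - \<alpha> (k+1) *\<^sub>R gf (x k)" for k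
    by (rule mirror_grad[OF w_grad z_step])
  have mir: "V (z (k+1)) \<le> V (z k) + (\<alpha> (k+1))\<^sup>2 * D (gf (x k)) / 2 - \<alpha> (k+1) * (gf (x k) \<bullet> (z k - xs))" for k
    unfolding V_def D_def by (rule mirror[OF Q w_sc grad])
  have coup: "gf xh \<bullet> (y (m+1) - xh) \<le> F m - f xh - D (gf xh) / (2 * L)" for m xh
    unfolding y_step F_def D_def by (rule couple[OF Q L_pos f_convex f_grad lip])
  have am: "b * (gf v \<bullet> (zz - xs)) \<le> b\<^sup>2 * D (gf v) / 2 + V zz" for b v zz
  proof -
    have "2 * ((b *\<^sub>R gf v) \<bullet> (zz - xs)) \<le> 1 * ((b *\<^sub>R gf v) \<bullet> (matrix_inv Q *v (b *\<^sub>R gf v))) + ((zz - xs) \<bullet> (Q *v (zz - xs))) / 1"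
      by (rule amgm[OF Q]) simp
    moreover have "(b *\<^sub>R gf v) \<bullet> (matrix_inv Q *v (b *\<^sub>R gf v)) = b\<^sup>2 * D (gf v)" unfolding D_def by (rule D_scale)
    moreover have "(zz - xs) \<bullet> (Q *v (zz - xs)) = (xs - zz) \<bullet> (Q *v (xs - zz))" by (rule P_neg)
    moreover have "V zz \<ge> 1/2 * ((xs - zz) \<bullet> (Q *v (xs - zz)))" unfolding V_def by (rule breg_low[OF Q w_sc])
    ultimately show ?thesis by simp
  qed
  have inv: "(\<alpha> (k+1))\<^sup>2 * L / 2 * (F k - fs) + V (z (k+1)) \<le> V x0" for k
  proof (induction k)
    case 0
    have "(\<alpha> 1)\<^sup>2 * L / 2 * (F 0 - fs) + V (z 1) \<le> V x0"
    proof (rule base_alg[OF L_pos \<alpha>1])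
      show "F 0 = f (x 0) - D (gf (x 0)) / (2 * L)" by (simp add: F_def)
      show "V (z 1) \<le> V x0 + (\<alpha> 1)\<^sup>2 * D (gf (x 0)) / 2 + \<alpha> 1 * (gf (x 0) \<bullet> (xs - x 0))"
        using mir[of 0] z0 x0 by (simp add: inner_diff_right algebra_simps)
      show "gf (x 0) \<bullet> (xs - x 0) \<le> fs - f (x 0) - D (gf (x 0)) / (2 * L)" by (rule opt)
    qed
    then show ?case by simp
  next
    case (Suc m)
    define a where "a = \<alpha> (m+2)"
    define c where "c = a * L / 2 - 1"
    have a: "a > 0" using \<alpha>_pos[of "m+2"] by (simp add: a_def)
    have rec: "a\<^sup>2 * L - 2 * a \<le> (\<alpha> (m+1))\<^sup>2 * L" and r0: "0 \<le> a\<^sup>2 * L - 2 * a"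
      using \<alpha>_rec[of "m+1"] by (simp_all add: a_def)
    have c0: "c \<ge> 0"
    proof -
      have "a * (a * L - 2) \<ge> 0" using r0 by (simp add: algebra_simps power2_eq_square)
      then have "a * L - 2 \<ge> 0" using a by (simp add: zero_le_mult_iff)
      then show ?thesis by (simp add: c_def)
    qed
    have cv: "x (m+1) - z (m+1) = c *\<^sub>R (y (m+1) - x (m+1))"
    proof -
      have t: "2 / (a * L) \<noteq> 0" using a L_pos by simp
      have "x (m+1) - z (m+1) = ((1 - 2 / (a * L)) / (2 / (a * L))) *\<^sub>R (y (m+1) - x (m+1))"
        by (rule coup_vec[OF t]) (unfold a_def, rule x_step)
      moreover have "(1 - 2 / (a * L)) / (2 / (a * L)) = c" using a L_pos by (simp add: c_def field_simps)
      ultimately show ?thesis by simp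
    qed
    have "a\<^sup>2 * L / 2 * (F (m+1) - fs) + V (z (m+2)) \<le> (\<alpha> (m+1))\<^sup>2 * L / 2 * (F m - fs) + V (z (m+1))"
    proof (rule step_alg[OF L_pos a c_def c0])
      show "F (m+1) = f (x (m+1)) - D (gf (x (m+1))) / (2 * L)" by (simp add: F_def)
      show "V (z (m+2)) \<le> V (z (m+1)) + a\<^sup>2 * D (gf (x (m+1))) / 2 - a * (gf (x (m+1)) \<bullet> (z (m+1) - xs))"
        using mir[of "m+1"] by (simp add: a_def)
      have "gf (x (m+1)) \<bullet> (z (m+1) - xs) = gf (x (m+1)) \<bullet> (x (m+1) - xs) - gf (x (m+1)) \<bullet> (x (m+1) - z (m+1))"
        by (simp add: inner_diff_right)
      then show "gf (x (m+1)) \<bullet> (z (m+1) - xs) = - (gf (x (m+1)) \<bullet> (xs - x (m+1))) - c * (gf (x (m+1)) \<bullet> (y (m+1) - x (m+1)))"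
        unfolding cv by (simp add: inner_diff_right)
      show "gf (x (m+1)) \<bullet> (xs - x (m+1)) \<le> fs - f (x (m+1)) - D (gf (x (m+1))) / (2 * L)" by (rule opt)
      show "gf (x (m+1)) \<bullet> (y (m+1) - x (m+1)) \<le> F m - f (x (m+1)) - D (gf (x (m+1))) / (2 * L)" by (rule coup)
      show "a\<^sup>2 * L - 2 * a \<le> (\<alpha> (m+1))\<^sup>2 * L" by (rule rec)
      show "F m \<ge> fs" by (rule Fge)
    qed
    with Suc.IH show ?case by (simp add: a_def)
  qed
  show ?thesis
  proof
    fix k
    define b where "b = \<alpha>t (k+1)"
    define xt where "xt = (1 - 1 / (b * L)) *\<^sub>R y k + (1 / (b * L)) *\<^sub>R z k"
    have b: "b > 0" using \<alpha>t_pos[of "k+1"] by (simp add: b_def)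
    have "f xt - fs \<le> V x0 / (L * b\<^sup>2)"
    proof (cases k)
      case 0
      have b1: "b = 1 / L" using \<alpha>t1 by (simp add: b_def 0)
      have xt: "xt = x0" using y0 z0 by (simp add: xt_def 0 algebra_simps)
      show ?thesis
      proof (rule tilde_alg[OF L_pos b, of 0])
        show "0 = b * L - 1" using L_pos by (simp add: b1)
        show "gf xt \<bullet> (xs - xt) \<le> fs - f xt - D (gf xt) / (2 * L)" by (rule opt)
        show "gf xt \<bullet> (z k - xs) = - (gf xt \<bullet> (xs - xt)) - 0 * (fs - f xt - D (gf xt) / (2 * L))"
          using xt z0 by (simp add: 0 inner_diff_right)
        show "b * (gf xt \<bullet> (z k - xs)) \<le> b\<^sup>2 * D (gf xt) / 2 + V (z k)" by (rule am)
        show "b\<^sup>2 * L - b \<le> 1/2 * 0\<^sup>2 * L" using L_pos by (simp add: b1 power2_eq_square)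
        show "0\<^sup>2 * L / 2 * (fs - fs) + V (z k) \<le> V x0" using z0 by (simp add: 0)
      qed simp_all
    next
      case (Suc m)
      define c where "c = b * L - 1"
      have rec: "b\<^sup>2 * L - b \<le> 1/2 * (\<alpha> (m+1))\<^sup>2 * L" and r0: "0 \<le> b\<^sup>2 * L - b"
        using \<alpha>t_rec[of "m+1"] by (simp_all add: b_def Suc)
      have c0: "c \<ge> 0"
      proof -
        have "b * (b * L - 1) \<ge> 0" using r0 by (simp add: algebra_simps power2_eq_square)
        then have "b * L - 1 \<ge> 0" using b by (simp add: zero_le_mult_iff)
        then show ?thesis by (simp add: c_def)
      qed
      have cv: "xt - z k = c *\<^sub>R (y k - xt)"
      proof -
        have t: "1 / (b * L) \<noteq> 0" using b L_pos by simp
        have "xt - z k = ((1 - 1 / (b * L)) / (1 / (b * L))) *\<^sub>R (y k - xt)"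
          by (rule coup_vec[OF t]) (simp add: xt_def)
        moreover have "(1 - 1 / (b * L)) / (1 / (b * L)) = c" using b L_pos by (simp add: c_def field_simps)
        ultimately show ?thesis by simp
      qed
      show ?thesis
      proof (rule tilde_alg[OF L_pos b c_def c0])
        show "gf xt \<bullet> (xs - xt) \<le> fs - f xt - D (gf xt) / (2 * L)" by (rule opt)
        have "gf xt \<bullet> (z k - xs) = gf xt \<bullet> (xt - xs) - gf xt \<bullet> (xt - z k)"
          by (simp add: inner_diff_right)
        then show "gf xt \<bullet> (z k - xs) = - (gf xt \<bullet> (xs - xt)) - c * (gf xt \<bullet> (y k - xt))"
          unfolding cv by (simp add: inner_diff_right)
        show "b * (gf xt \<bullet> (z k - xs)) \<le> b\<^sup>2 * D (gf xt) / 2 + V (z k)" by (rule am)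
        show "gf xt \<bullet> (y k - xt) \<le> F m - f xt - D (gf xt) / (2 * L)" using coup[of xt m] by (simp add: Suc)
        show "b\<^sup>2 * L - b \<le> 1/2 * (\<alpha> (m+1))\<^sup>2 * L" by (rule rec)
        show "F m \<ge> fs" by (rule Fge)
        show "(\<alpha> (m+1))\<^sup>2 * L / 2 * (F m - fs) + V (z k) \<le> V x0" using inv[of m] by (simp add: Suc)
      qed
    qed
    then show "f ((1 - 1 / (\<alpha>t (k+1) * L)) *\<^sub>R y k + (1 / (\<alpha>t (k+1) * L)) *\<^sub>R z k) - f xs
             \<le> bregman w gw x0 xs / (L * (\<alpha>t (k+1))\<^sup>2)"
      by (simp add: xt_def b_def fs_def V_def)
  qed
qed

end
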